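(* Every $(2P_3,C_4,C_6,C_7,\text{3-pentagon})$-free graph is $(\text{3PC},\text{proper wheel})$-free, i.e. it contains no induced subgraph that is a theta, a pyramid, a prism, or a proper wheel.
   Context: Graphs are finite, simple, nonnull. A graph is $(H_1,\dots,H_m)$-free if it has no induced subgraph isomorphic to any $H_i$. $P_k$, $C_k$ are the path and cycle on $k$ vertices; $2P_3$ is two disjoint copies of $P_3$. The 3-pentagon is the graph on vertices $a,b_1,b_2,b_3,c_1,c_2,c_3$ where $a$ is adjacent to each $b_i$ and to no $c_i$, $\{b_1,b_2,b_3\}$ is stable, $\{c_1,c_2,c_3\}$ is a clique, and $b_ic_j$ is an edge iff $i=j$. A hole is an induced cycle on at least four vertices. A theta is any subdivision of $K_{2,3}$ (including $K_{2,3}$). A pyramid is any subdivision of $K_4$ in which one triangle remains unsubdivided and, of the remaining three edges, at least two are subdivided at least once. A prism is any subdivision of $\overline{C_6}$ (the complement of $C_6$, including $\overline{C_6}$ itself) in which the two triangles remain unsubdivided. A 3PC is a theta, pyramid, or prism. A wheel is a graph consisting of a hole and an additional vertex with at least three neighbours in the hole; it is universal if that vertex is adjacent to all vertices of the hole, a twin wheel if it is adjacent to exactly three consecutive vertices of the hole and no others, and proper if it is neither universal nor a twin wheel. *)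

theory Defs
  imports Main
begin

definition graph :: "'a set \<Rightarrow> ('a \<Rightarrow> 'a \<Rightarrow> bool) \<Rightarrow> bool" where
  "graph V E \<longleftrightarrow> finite V \<and> V \<noteq> {} \<and> (\<forall>x y. E x y \<longrightarrow> E y x) \<and> (\<forall>x. \<not> E x x)
     \<and> (\<forall>x y. E x y \<longrightarrow> x \<in> V \<and> y \<in> V)"

definition has_induced :: "'a set \<Rightarrow> ('a \<Rightarrow> 'a \<Rightarrow> bool) \<Rightarrow> 'b set \<Rightarrow> ('b \<Rightarrow> 'b \<Rightarrow> bool) \<Rightarrow> bool" where
  "has_induced V E HV HE \<longleftrightarrow> (\<exists>f. inj_on f HV \<and> f ` HV \<subseteq> V \<and>
      (\<forall>u\<in>HV. \<forall>v\<in>HV. HE u v \<longleftrightarrow> E (f u) (f v)))"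

definition path_E :: "nat \<Rightarrow> nat \<Rightarrow> nat \<Rightarrow> bool" where
  "path_E k i j \<longleftrightarrow> i < k \<and> j < k \<and> (i = j + 1 \<or> j = i + 1)"

definition cycle_E :: "nat \<Rightarrow> nat \<Rightarrow> nat \<Rightarrow> bool" where
  "cycle_E k i j \<longleftrightarrow> i < k \<and> j < k \<and> i \<noteq> j \<and> ((i + 1) mod k = j \<or> (j + 1) mod k = i)"

(* 2P_3 on {0..<6}: paths 0-1-2 and 3-4-5 *)
definition twoP3_E :: "nat \<Rightarrow> nat \<Rightarrow> bool" where
  "twoP3_E i j \<longleftrightarrow> path_E 3 i j \<or> (i \<ge> 3 \<and> j \<ge> 3 \<and> path_E 3 (i - 3) (j - 3))"

(* 3-pentagon on {0..<7}: a = 0, b_i = i (i=1,2,3), c_i = i+3 *)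
definition pent3_edge :: "nat \<Rightarrow> nat \<Rightarrow> bool" where
  "pent3_edge i j \<longleftrightarrow> (i = 0 \<and> j \<in> {1,2,3}) \<or> (i \<in> {4,5,6} \<and> j \<in> {4,5,6} \<and> i \<noteq> j)
     \<or> (i \<in> {1,2,3} \<and> j = i + 3)"

definition pent3_E :: "nat \<Rightarrow> nat \<Rightarrow> bool" where
  "pent3_E i j \<longleftrightarrow> pent3_edge i j \<or> pent3_edge j i"

definition interior :: "'a list \<Rightarrow> 'a list" where
  "interior xs = butlast (tl xs)"

definition path_adj :: "'a list \<Rightarrow> 'a \<Rightarrow> 'a \<Rightarrow> bool" where
  "path_adj xs x y \<longleftrightarrow> (\<exists>k. Suc k < length xs \<and>
      ((xs ! k = x \<and> xs ! Suc k = y) \<or> (xs ! k = y \<and> xs ! Suc k = x)))"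

(* The induced subgraph G[S] is (isomorphic to) a subdivision of the base graph K with
   vertex set KV and edge list es: \<phi> maps branch vertices, P i is the path replacing es!i. *)
definition subdiv_in :: "('a \<Rightarrow> 'a \<Rightarrow> bool) \<Rightarrow> 'a set \<Rightarrow> nat set \<Rightarrow> (nat \<times> nat) list
      \<Rightarrow> (nat \<Rightarrow> 'a) \<Rightarrow> (nat \<Rightarrow> 'a list) \<Rightarrow> bool" where
  "subdiv_in E S KV es \<phi> P \<longleftrightarrow>
     inj_on \<phi> KV \<and>
     (\<forall>i<length es. fst (es ! i) \<in> KV \<and> snd (es ! i) \<in> KV \<and> distinct (P i) \<and> length (P i) \<ge> 2
        \<and> hd (P i) = \<phi> (fst (es ! i)) \<and> last (P i) = \<phi> (snd (es ! i))
        \<and> (\<forall>x\<in>set (interior (P i)). x \<notin> \<phi> ` KV)) \<and>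
     (\<forall>i<length es. \<forall>j<length es. i \<noteq> j \<longrightarrow> set (interior (P i)) \<inter> set (interior (P j)) = {}) \<and>
     S = \<phi> ` KV \<union> (\<Union>i<length es. set (P i)) \<and>
     (\<forall>x\<in>S. \<forall>y\<in>S. E x y \<longleftrightarrow> (\<exists>i<length es. path_adj (P i) x y))"

(* K_{2,3}: sides {0,1} and {2,3,4} *)
definition K23_edges :: "(nat \<times> nat) list" where
  "K23_edges = [(0,2),(0,3),(0,4),(1,2),(1,3),(1,4)]"

(* K_4 on {0,1,2,3}; indices 0,1,2 form the triangle {0,1,2} *)
definition K4_edges :: "(nat \<times> nat) list" where
  "K4_edges = [(0,1),(1,2),(0,2),(0,3),(1,3),(2,3)]"

(* complement of C_6 (cycle 0-1-2-3-4-5-0): triangles {0,2,4},{1,3,5} (indices 0..5),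
   matching edges (0,3),(1,4),(2,5) (indices 6,7,8) *)
definition C6bar_edges :: "(nat \<times> nat) list" where
  "C6bar_edges = [(0,2),(2,4),(0,4),(1,3),(3,5),(1,5),(0,3),(1,4),(2,5)]"

definition is_theta :: "('a \<Rightarrow> 'a \<Rightarrow> bool) \<Rightarrow> 'a set \<Rightarrow> bool" where
  "is_theta E S \<longleftrightarrow> (\<exists>\<phi> P. subdiv_in E S {0..4} K23_edges \<phi> P)"

definition is_pyramid :: "('a \<Rightarrow> 'a \<Rightarrow> bool) \<Rightarrow> 'a set \<Rightarrow> bool" where
  "is_pyramid E S \<longleftrightarrow> (\<exists>\<phi> P. subdiv_in E S {0..3} K4_edges \<phi> P
      \<and> length (P 0) = 2 \<and> length (P 1) = 2 \<and> length (P 2) = 2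
      \<and> card {i \<in> {3,4,5}. length (P i) \<ge> 3} \<ge> 2)"

definition is_prism :: "('a \<Rightarrow> 'a \<Rightarrow> bool) \<Rightarrow> 'a set \<Rightarrow> bool" where
  "is_prism E S \<longleftrightarrow> (\<exists>\<phi> P. subdiv_in E S {0..5} C6bar_edges \<phi> P
      \<and> (\<forall>i<6. length (P i) = 2))"

definition has_3PC :: "'a set \<Rightarrow> ('a \<Rightarrow> 'a \<Rightarrow> bool) \<Rightarrow> bool" where
  "has_3PC V E \<longleftrightarrow> (\<exists>S\<subseteq>V. is_theta E S \<or> is_pyramid E S \<or> is_prism E S)"

definition hole :: "('a \<Rightarrow> 'a \<Rightarrow> bool) \<Rightarrow> 'a list \<Rightarrow> bool" where
  "hole E cs \<longleftrightarrow> distinct cs \<and> length cs \<ge> 4 \<and>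
     (\<forall>i<length cs. \<forall>j<length cs. E (cs ! i) (cs ! j) \<longleftrightarrow> cycle_E (length cs) i j)"

definition proper_wheel :: "('a \<Rightarrow> 'a \<Rightarrow> bool) \<Rightarrow> 'a list \<Rightarrow> 'a \<Rightarrow> bool" where
  "proper_wheel E cs x \<longleftrightarrow> hole E cs \<and> x \<notin> set cs \<and>
     card {v \<in> set cs. E x v} \<ge> 3 \<and>
     \<not> (\<forall>v\<in>set cs. E x v) \<and>
     \<not> (\<exists>i<length cs. {v \<in> set cs. E x v} =
            {cs ! i, cs ! ((i + 1) mod length cs), cs ! ((i + 2) mod length cs)})"

definition has_proper_wheel :: "'a set \<Rightarrow> ('a \<Rightarrow> 'a \<Rightarrow> bool) \<Rightarrow> bool" where
  "has_proper_wheel V E \<longleftrightarrow> (\<exists>cs x. set cs \<subseteq> V \<and> x \<in> V \<and> proper_wheel E cs x)"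

end

theory Submission
  imports Defs
begin
lemma path_adj_Nil[simp]: "\<not> path_adj [] x y"
  by (simp add: path_adj_def)

lemma path_adj_Cons: "path_adj (a # xs) x y \<longleftrightarrow>
   (xs \<noteq> [] \<and> ((a = x \<and> hd xs = y) \<or> (a = y \<and> hd xs = x))) \<or> path_adj xs x y"
proof
  assume "path_adj (a # xs) x y"
  then obtain k where k: "Suc k < length (a#xs)" "((a#xs) ! k = x \<and> (a#xs) ! Suc k = y) \<or> ((a#xs) ! k = y \<and> (a#xs) ! Suc k = x)"
    unfolding path_adj_def by blast
  show "(xs \<noteq> [] \<and> ((a = x \<and> hd xs = y) \<or> (a = y \<and> hd xs = x))) \<or> path_adj xs x y"
  proof (cases k)
    case 0 then show ?thesis using k by (cases xs) auto
  next
    case (Suc m) then show ?thesis using k unfolding path_adj_def by auto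
  qed
next
  assume "(xs \<noteq> [] \<and> ((a = x \<and> hd xs = y) \<or> (a = y \<and> hd xs = x))) \<or> path_adj xs x y"
  then show "path_adj (a # xs) x y"
  proof
    assume "xs \<noteq> [] \<and> ((a = x \<and> hd xs = y) \<or> (a = y \<and> hd xs = x))"
    then show ?thesis unfolding path_adj_def
      by (rule_tac x=0 in exI) (auto simp: hd_conv_nth)
  next
    assume "path_adj xs x y"
    then obtain k where "Suc k < length xs" "(xs ! k = x \<and> xs ! Suc k = y) \<or> (xs ! k = y \<and> xs ! Suc k = x)"
      unfolding path_adj_def by blast
    then show ?thesis unfolding path_adj_def by (rule_tac x="Suc k" in exI) auto
  qed
qed

lemma path_adj_append: "path_adj (xs @ ys) x y \<longleftrightarrow> path_adj xs x y \<or> path_adj ys x y \<or>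
   (xs \<noteq> [] \<and> ys \<noteq> [] \<and> ((last xs = x \<and> hd ys = y) \<or> (last xs = y \<and> hd ys = x)))"
  by (induction xs) (auto simp: path_adj_Cons)

lemma path_adj_single[simp]: "\<not> path_adj [a] x y"
  by (simp add: path_adj_Cons)

lemma path_adj_rev[simp]: "path_adj (rev xs) x y = path_adj xs x y"
  by (induction xs) (auto simp: path_adj_append path_adj_Cons last_rev hd_rev)

lemma path_adj_sym: "path_adj xs x y = path_adj xs y x"
  unfolding path_adj_def by blast

lemma path_adj_set: "path_adj xs x y \<Longrightarrow> x \<in> set xs \<and> y \<in> set xs"
  unfolding path_adj_def by auto

lemma path_adj_neq: "distinct xs \<Longrightarrow> path_adj xs x y \<Longrightarrow> x \<noteq> y"
  unfolding path_adj_def by (auto simp: nth_eq_iff_index_eq)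

lemma decomp: "length xs \<ge> 2 \<Longrightarrow> xs = hd xs # interior xs @ [last xs]"
  unfolding interior_def
  by (cases xs) (auto simp: last_tl)

lemma hd_butlast': "butlast xs \<noteq> [] \<Longrightarrow> hd (butlast xs) = hd xs"
  by (cases xs) auto

lemma walk_adj:
  assumes "\<forall>q\<in>set qs. length q \<ge> 2"
    and "\<forall>i. Suc i < length qs \<longrightarrow> last (qs!i) = hd (qs ! Suc i)"
    and "qs \<noteq> []"
  shows "path_adj (concat (map butlast qs) @ [last (last qs)]) x y \<longleftrightarrow> (\<exists>q\<in>set qs. path_adj q x y)"
  using assms
proof (induction qs)
  case Nil then show ?case by simp
next
  case (Cons q qs)
  have q2: "length q \<ge> 2" using Cons.prems by auto
  have qeq: "q = butlast q @ [last q]" using q2 by (cases q rule: rev_cases) auto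
  show ?case
  proof (cases "qs = []")
    case True
    then show ?thesis using qeq by simp
  next
    case False
    have ch: "\<forall>i. Suc i < length qs \<longrightarrow> last (qs!i) = hd (qs ! Suc i)"
    proof (intro allI impI)
      fix i assume "Suc i < length qs"
      then show "last (qs!i) = hd (qs ! Suc i)" using Cons.prems(2)[rule_format, of "Suc i"] by simp
    qed
    have lq: "last q = hd (hd qs)" using Cons.prems(2)[rule_format, of 0] False
      by (simp add: hd_conv_nth)
    have h2: "length (hd qs) \<ge> 2" using Cons.prems(1) False by auto
    have hb: "butlast (hd qs) \<noteq> []" using h2 by (cases "hd qs" rule: rev_cases) auto
    define R where "R = concat (map butlast qs) @ [last (last qs)]"
    have IH: "path_adj R x y \<longleftrightarrow> (\<exists>q\<in>set qs. path_adj q x y)"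
      unfolding R_def using Cons.IH Cons.prems False ch by auto
    have hR: "hd R = hd (hd qs)" unfolding R_def using False hb
      by (cases qs) (auto simp: hd_butlast')
    have "path_adj q x y \<longleftrightarrow> path_adj (butlast q) x y \<or>
       (butlast q \<noteq> [] \<and> ((last (butlast q) = x \<and> last q = y) \<or> (last (butlast q) = y \<and> last q = x)))"
      by (subst qeq) (simp add: path_adj_append)
    moreover have "concat (map butlast (q # qs)) @ [last (last (q # qs))] = butlast q @ R"
      unfolding R_def using False by simp
    moreover have "R \<noteq> []" unfolding R_def by simp
    ultimately show ?thesis using IH hR lq by (auto simp: path_adj_append)
  qed
qed

lemma distinct_concat_nth:
  assumes "\<forall>xs\<in>set xss. distinct xs"
    and "\<forall>i<length xss. \<forall>j<length xss. i \<noteq> j \<longrightarrow> set (xss!i) \<inter> set (xss!j) = {}"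
  shows "distinct (concat xss)"
  using assms
proof (induction xss)
  case Nil then show ?case by simp
next
  case (Cons xs xss)
  have "\<forall>i<length xss. \<forall>j<length xss. i \<noteq> j \<longrightarrow> set (xss!i) \<inter> set (xss!j) = {}"
  proof (intro allI impI)
    fix i j assume "i < length xss" "j < length xss" "i \<noteq> j"
    then show "set (xss!i) \<inter> set (xss!j) = {}" using Cons.prems(2)[rule_format, of "Suc i" "Suc j"] by simp
  qed
  then have d: "distinct (concat xss)" using Cons by auto
  have "set xs \<inter> set (concat xss) = {}"
  proof -
    { fix z assume "z \<in> set xs" "z \<in> set (concat xss)"
      then obtain ys where "ys \<in> set xss" "z \<in> set ys" by auto
      then obtain j where "j < length xss" "xss ! j = ys" by (meson in_set_conv_nth)
      then have False using Cons.prems(2)[rule_format, of 0 "Suc j"] \<open>z \<in> set xs\<close> \<open>z \<in> set ys\<close> by auto }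
    then show ?thesis by blast
  qed
  then show ?case using d Cons.prems(1) by auto
qed

lemma cyc_nth: "cs \<noteq> [] \<Longrightarrow> k < length cs \<Longrightarrow> (cs @ [hd cs]) ! Suc k = cs ! (Suc k mod length cs)"
proof (cases "Suc k < length cs")
  case True then show ?thesis by (simp add: nth_append)
next
  case False
  assume "cs \<noteq> []" "k < length cs"
  then have "Suc k = length cs" using False by simp
  then show ?thesis using \<open>cs \<noteq> []\<close> by (simp add: nth_append hd_conv_nth)
qed

lemma cyc_adj_iff:
  assumes d: "distinct cs" and n: "length cs \<ge> 3" and i: "i < length cs" and j: "j < length cs"
  shows "path_adj (cs @ [hd cs]) (cs!i) (cs!j) \<longleftrightarrow> cycle_E (length cs) i j"
proof -
  let ?n = "length cs"
  have ne: "cs \<noteq> []" using n by auto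
  have "path_adj (cs @ [hd cs]) (cs!i) (cs!j) \<longleftrightarrow>
     (\<exists>k<?n. (cs!k = cs!i \<and> cs!(Suc k mod ?n) = cs!j) \<or> (cs!k = cs!j \<and> cs!(Suc k mod ?n) = cs!i))"
  proof -
    have L: "\<And>k. k < ?n \<Longrightarrow> (cs@[hd cs])!k = cs!k \<and> (cs@[hd cs])!Suc k = cs!(Suc k mod ?n)"
      using ne cyc_nth[OF ne] by (simp add: nth_append del: nth_Cons_Suc)
    show ?thesis
    proof
      assume "path_adj (cs @ [hd cs]) (cs!i) (cs!j)"
      then obtain k where k: "Suc k < length (cs@[hd cs])" and
        P: "((cs@[hd cs]) ! k = cs!i \<and> (cs@[hd cs]) ! Suc k = cs!j) \<or> ((cs@[hd cs]) ! k = cs!j \<and> (cs@[hd cs]) ! Suc k = cs!i)"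
        unfolding path_adj_def by blast
      have kn: "k < ?n" using k by simp
      show "\<exists>k<?n. (cs!k = cs!i \<and> cs!(Suc k mod ?n) = cs!j) \<or> (cs!k = cs!j \<and> cs!(Suc k mod ?n) = cs!i)"
        using P L[OF kn] kn by metis
    next
      assume "\<exists>k<?n. (cs!k = cs!i \<and> cs!(Suc k mod ?n) = cs!j) \<or> (cs!k = cs!j \<and> cs!(Suc k mod ?n) = cs!i)"
      then obtain k where kn: "k < ?n" and P: "(cs!k = cs!i \<and> cs!(Suc k mod ?n) = cs!j) \<or> (cs!k = cs!j \<and> cs!(Suc k mod ?n) = cs!i)"
        by blast
      have "Suc k < length (cs@[hd cs])" using kn by simp
      then show "path_adj (cs @ [hd cs]) (cs!i) (cs!j)" unfolding path_adj_def
        using P L[OF kn] by metis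
    qed
  qed
  also have "\<dots> \<longleftrightarrow> (\<exists>k<?n. (k = i \<and> Suc k mod ?n = j) \<or> (k = j \<and> Suc k mod ?n = i))"
  proof -
    have "\<And>k. k < ?n \<Longrightarrow> Suc k mod ?n < ?n" using ne by simp
    then show ?thesis using d i j by (metis nth_eq_iff_index_eq)
  qed
  also have "\<dots> \<longleftrightarrow> cycle_E ?n i j"
  proof -
    have a: "Suc i mod ?n \<noteq> i"
    proof (cases "Suc i < ?n")
      case True then show ?thesis by simp
    next
      case False then have "Suc i = ?n" using i by simp
      then show ?thesis using n by simp
    qed
    have b: "Suc j mod ?n \<noteq> j"
    proof (cases "Suc j < ?n")
      case True then show ?thesis by simp
    next
      case False then have "Suc j = ?n" using j by simp
      then show ?thesis using n by simp
    qed
    show ?thesis unfolding cycle_E_def using a b i j by auto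
  qed
  finally show ?thesis .
qed

lemma hole_intro:
  assumes "distinct cs" "length cs \<ge> 4"
    and "\<forall>x\<in>set cs. \<forall>y\<in>set cs. E x y \<longleftrightarrow> path_adj (cs @ [hd cs]) x y"
  shows "hole E cs"
  unfolding hole_def using assms cyc_adj_iff[of cs] by auto

lemma hole_cycle_induced:
  assumes "hole E cs" "set cs \<subseteq> V"
  shows "has_induced V E {0..<length cs} (cycle_E (length cs))"
  unfolding has_induced_def
proof (intro exI[of _ "nth cs"] conjI)
  show "inj_on ((!) cs) {0..<length cs}" using assms by (auto simp: hole_def inj_on_nth)
  show "(!) cs ` {0..<length cs} \<subseteq> V" using assms by auto
  show "\<forall>u\<in>{0..<length cs}. \<forall>v\<in>{0..<length cs}. cycle_E (length cs) u v = E (cs ! u) (cs ! v)"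
    using assms(1) by (auto simp: hole_def)
qed

lemma twoP3_cyc:
  assumes "(n::nat) \<ge> 8" "i < 6" "j < 6"
  shows "twoP3_E i j \<longleftrightarrow> cycle_E n (if i < 3 then i else i + 1) (if j < 3 then j else j + 1)"
proof -
  have i: "i = 0 \<or> i = 1 \<or> i = 2 \<or> i = 3 \<or> i = 4 \<or> i = 5" using assms by arith
  have j: "j = 0 \<or> j = 1 \<or> j = 2 \<or> j = 3 \<or> j = 4 \<or> j = 5" using assms by arith
  show ?thesis using i j assms(1) by (elim disjE) (auto simp: twoP3_E_def path_E_def cycle_E_def)
qed

lemma hole_len5:
  assumes "\<not> has_induced V E {0..<6} twoP3_E"
    and "\<not> has_induced V E {0..<4} (cycle_E 4)"
    and "\<not> has_induced V E {0..<6} (cycle_E 6)"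
    and "\<not> has_induced V E {0..<7} (cycle_E 7)"
    and h: "hole E cs" and s: "set cs \<subseteq> V"
  shows "length cs = 5"
proof -
  have ind: "has_induced V E {0..<length cs} (cycle_E (length cs))" using hole_cycle_induced[OF h s] .
  have ge: "length cs \<ge> 4" using h by (simp add: hole_def)
  have n8: "\<not> length cs \<ge> 8"
  proof
    assume n: "length cs \<ge> 8"
    define g where "g = (\<lambda>i::nat. if i < 3 then i else i + 1)"
    have "has_induced V E {0..<6} twoP3_E"
      unfolding has_induced_def
    proof (intro exI[of _ "\<lambda>i. cs ! g i"] conjI)
      have d: "distinct cs" using h by (simp add: hole_def)
      show "inj_on (\<lambda>i. cs ! g i) {0..<6}"
      proof (rule inj_onI)
        fix a b assume "a \<in> {0..<(6::nat)}" "b \<in> {0..<(6::nat)}" "cs ! g a = cs ! g b"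
        then have "g a = g b" using d n unfolding g_def by (auto simp: nth_eq_iff_index_eq split: if_splits)
        then show "a = b" unfolding g_def by (auto split: if_splits)
      qed
      show "(\<lambda>i. cs ! g i) ` {0..<6} \<subseteq> V" using s n unfolding g_def by auto
      show "\<forall>u\<in>{0..<6}. \<forall>v\<in>{0..<6}. twoP3_E u v = E (cs ! g u) (cs ! g v)"
      proof (intro ballI)
        fix u v assume uv: "u \<in> {0..<(6::nat)}" "v \<in> {0..<(6::nat)}"
        have "g u < length cs" "g v < length cs" using uv n unfolding g_def by auto
        then have "E (cs ! g u) (cs ! g v) = cycle_E (length cs) (g u) (g v)" using h by (simp add: hole_def)
        then show "twoP3_E u v = E (cs ! g u) (cs ! g v)" using twoP3_cyc[OF n, of u v] uv unfolding g_def by simp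
      qed
    qed
    then show False using assms(1) by simp
  qed
  show ?thesis
  proof (rule ccontr)
    assume "length cs \<noteq> 5"
    then have "length cs = 4 \<or> length cs = 6 \<or> length cs = 7" using ge n8 by arith
    then show False using ind assms(2-4) by auto
  qed
qed

definition sti :: "(nat \<times> nat) list \<Rightarrow> nat \<times> bool \<Rightarrow> nat" where
  "sti es r = (if snd r then snd (es ! fst r) else fst (es ! fst r))"
definition edi :: "(nat \<times> nat) list \<Rightarrow> nat \<times> bool \<Rightarrow> nat" where
  "edi es r = (if snd r then fst (es ! fst r) else snd (es ! fst r))"
definition oq :: "(nat \<Rightarrow> 'a list) \<Rightarrow> nat \<times> bool \<Rightarrow> 'a list" where
  "oq P r = (if snd r then rev (P (fst r)) else P (fst r))"

lemma oq_facts: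
  assumes sd: "subdiv_in E S KV es \<phi> P" and k: "fst r < length es"
  shows "hd (oq P r) = \<phi> (sti es r)" "last (oq P r) = \<phi> (edi es r)" "distinct (oq P r)"
    "length (oq P r) = length (P (fst r))" "length (P (fst r)) \<ge> 2"
    "set (oq P r) = set (P (fst r))"
    "set (butlast (oq P r)) = insert (\<phi> (sti es r)) (set (interior (P (fst r))))"
    "path_adj (oq P r) x y = path_adj (P (fst r)) x y"
    "sti es r \<in> KV" "edi es r \<in> KV"
proof -
  have pk: "fst (es ! fst r) \<in> KV \<and> snd (es ! fst r) \<in> KV \<and> distinct (P (fst r)) \<and> length (P (fst r)) \<ge> 2
        \<and> hd (P (fst r)) = \<phi> (fst (es ! fst r)) \<and> last (P (fst r)) = \<phi> (snd (es ! fst r))"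
    using sd k unfolding subdiv_in_def by blast
  have dec: "P (fst r) = hd (P (fst r)) # interior (P (fst r)) @ [last (P (fst r))]"
    using pk decomp by blast
  show "hd (oq P r) = \<phi> (sti es r)" "last (oq P r) = \<phi> (edi es r)" "distinct (oq P r)"
    "length (oq P r) = length (P (fst r))" "length (P (fst r)) \<ge> 2"
    "set (oq P r) = set (P (fst r))"
    "path_adj (oq P r) x y = path_adj (P (fst r)) x y"
    "sti es r \<in> KV" "edi es r \<in> KV"
    using pk unfolding oq_def sti_def edi_def by (auto simp: hd_rev last_rev)
  show "set (butlast (oq P r)) = insert (\<phi> (sti es r)) (set (interior (P (fst r))))"
  proof (cases "snd r")
    case True
    have "butlast (oq P r) = last (P (fst r)) # rev (interior (P (fst r)))"
      unfolding oq_def using True by (subst dec) simp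
    then show ?thesis using True pk unfolding sti_def by simp
  next
    case False
    have "butlast (oq P r) = hd (P (fst r)) # interior (P (fst r))"
      unfolding oq_def using False by (subst dec) (simp add: butlast_append)
    then show ?thesis using False pk unfolding sti_def by simp
  qed
qed

lemma route_hole:
  assumes sd: "subdiv_in E S KV es \<phi> P"
    and ne: "rt \<noteq> []"
    and idx: "\<forall>r\<in>set rt. fst r < length es"
    and dk: "distinct (map fst rt)"
    and ch: "\<forall>i. Suc i < length rt \<longrightarrow> edi es (rt!i) = sti es (rt!Suc i)"
    and cl: "edi es (last rt) = sti es (hd rt)"
    and ds: "distinct (map (sti es) rt)"
    and nc: "\<forall>k<length es. k \<notin> fst ` set rt \<longrightarrow> \<not> (fst (es!k) \<in> sti es ` set rt \<and> snd (es!k) \<in> sti es ` set rt)"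
    and csd: "cs = concat (map (butlast \<circ> oq P) rt)"
  shows "distinct cs \<and> set cs \<subseteq> S \<and> length cs = (\<Sum>r\<leftarrow>rt. length (P (fst r)) - 1)
     \<and> (\<forall>x\<in>set cs. \<forall>y\<in>set cs. E x y \<longleftrightarrow> path_adj (cs @ [hd cs]) x y)"
proof -
  have inj: "inj_on \<phi> KV" using sd unfolding subdiv_in_def by blast
  have pk: "\<forall>i<length es. fst (es ! i) \<in> KV \<and> snd (es ! i) \<in> KV \<and> distinct (P i) \<and> length (P i) \<ge> 2
        \<and> hd (P i) = \<phi> (fst (es ! i)) \<and> last (P i) = \<phi> (snd (es ! i))
        \<and> (\<forall>x\<in>set (interior (P i)). x \<notin> \<phi> ` KV)" using sd unfolding subdiv_in_def by blast
  have disj: "\<forall>i<length es. \<forall>j<length es. i \<noteq> j \<longrightarrow> set (interior (P i)) \<inter> set (interior (P j)) = {}"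
    using sd unfolding subdiv_in_def by blast
  have Sd: "S = \<phi> ` KV \<union> (\<Union>i<length es. set (P i))" using sd unfolding subdiv_in_def by blast
  have adj: "\<forall>x\<in>S. \<forall>y\<in>S. E x y \<longleftrightarrow> (\<exists>i<length es. path_adj (P i) x y)" using sd unfolding subdiv_in_def by blast
  note of = oq_facts[OF sd]
  define qs where "qs = map (oq P) rt"
  have cs2: "cs = concat (map butlast qs)" unfolding csd qs_def by simp
  have setcs: "set cs = (\<Union>r\<in>set rt. insert (\<phi> (sti es r)) (set (interior (P (fst r)))))"
    unfolding csd using of(7) idx by auto
  have sub: "set cs \<subseteq> S"
  proof
    fix x assume "x \<in> set cs"
    then obtain r where r: "r \<in> set rt" "x \<in> set (butlast (oq P r))" unfolding csd by auto
    then have "x \<in> set (P (fst r))" using of(6)[of r] idx by (auto dest: in_set_butlastD)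
    then show "x \<in> S" using Sd idx r by auto
  qed
  have dist: "distinct cs"
    unfolding csd
  proof (rule distinct_concat_nth)
    show "\<forall>xs\<in>set (map (butlast \<circ> oq P) rt). distinct xs" using of(3) idx by (auto intro: distinct_butlast)
    show "\<forall>i<length (map (butlast \<circ> oq P) rt). \<forall>j<length (map (butlast \<circ> oq P) rt). i \<noteq> j \<longrightarrow>
       set (map (butlast \<circ> oq P) rt ! i) \<inter> set (map (butlast \<circ> oq P) rt ! j) = {}"
    proof (intro allI impI)
      fix i j assume ij: "i < length (map (butlast \<circ> oq P) rt)" "j < length (map (butlast \<circ> oq P) rt)" "i \<noteq> j"
      let ?ri = "rt ! i" and ?rj = "rt ! j"
      have ri: "?ri \<in> set rt" and rj: "?rj \<in> set rt" using ij by auto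
      have ki: "fst ?ri < length es" and kj: "fst ?rj < length es" using ri rj idx by auto
      have kne: "fst ?ri \<noteq> fst ?rj" using nth_eq_iff_index_eq[OF dk, of i j] ij by simp
      have sne: "sti es ?ri \<noteq> sti es ?rj" using nth_eq_iff_index_eq[OF ds, of i j] ij by simp
      have phne: "\<phi> (sti es ?ri) \<noteq> \<phi> (sti es ?rj)"
        using inj sne of(9)[OF ki] of(9)[OF kj] by (meson inj_on_def)
      have a1: "\<phi> (sti es ?ri) \<notin> set (interior (P (fst ?rj)))" using pk kj of(9)[OF ki] by blast
      have a2: "\<phi> (sti es ?rj) \<notin> set (interior (P (fst ?ri)))" using pk ki of(9)[OF kj] by blast
      have a3: "set (interior (P (fst ?ri))) \<inter> set (interior (P (fst ?rj))) = {}" using disj ki kj kne by blast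
      show "set (map (butlast \<circ> oq P) rt ! i) \<inter> set (map (butlast \<circ> oq P) rt ! j) = {}"
        using ij of(7)[OF ki] of(7)[OF kj] phne a1 a2 a3 by auto
    qed
  qed
  have len: "length cs = (\<Sum>r\<leftarrow>rt. length (P (fst r)) - 1)"
  proof -
    have eqm: "map (length \<circ> (butlast \<circ> oq P)) rt = map (\<lambda>r. length (P (fst r)) - 1) rt"
      using of(4) idx by (auto intro!: map_cong)
    have "length cs = sum_list (map (length \<circ> (butlast \<circ> oq P)) rt)"
      unfolding csd by (simp add: length_concat)
    then show ?thesis by (simp only: eqm)
  qed
  have q2: "\<forall>q\<in>set qs. length q \<ge> 2" unfolding qs_def using of(4) of(5) idx by auto
  have qch: "\<forall>i. Suc i < length qs \<longrightarrow> last (qs!i) = hd (qs ! Suc i)"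
  proof (intro allI impI)
    fix i assume i: "Suc i < length qs"
    then have "rt ! i \<in> set rt" "rt ! Suc i \<in> set rt" unfolding qs_def by auto
    then show "last (qs!i) = hd (qs ! Suc i)" using i ch idx of(1) of(2) unfolding qs_def by auto
  qed
  have qne: "qs \<noteq> []" using ne unfolding qs_def by simp
  have hdr: "hd rt \<in> set rt" "last rt \<in> set rt" using ne by auto
  have lastq: "last (last qs) = \<phi> (sti es (hd rt))"
    unfolding qs_def using ne of(2) idx hdr cl by (simp add: last_map)
  have hb: "butlast (oq P (hd rt)) \<noteq> []"
  proof -
    have "length (oq P (hd rt)) \<ge> 2" using of(4) of(5) idx hdr by simp
    then show ?thesis by (cases "oq P (hd rt)" rule: rev_cases) auto
  qed
  have hdcs: "hd cs = \<phi> (sti es (hd rt))"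
    unfolding csd using ne hb of(1) idx hdr by (cases rt) (auto simp: hd_butlast')
  have walk: "\<And>x y. path_adj (cs @ [hd cs]) x y \<longleftrightarrow> (\<exists>r\<in>set rt. path_adj (P (fst r)) x y)"
  proof -
    fix x y
    have "path_adj (cs @ [hd cs]) x y \<longleftrightarrow> (\<exists>q\<in>set qs. path_adj q x y)"
      using walk_adj[OF q2 qch qne, of x y] cs2 lastq hdcs by simp
    also have "\<dots> \<longleftrightarrow> (\<exists>r\<in>set rt. path_adj (P (fst r)) x y)"
      unfolding qs_def using of(8) idx by auto
    finally show "path_adj (cs @ [hd cs]) x y \<longleftrightarrow> (\<exists>r\<in>set rt. path_adj (P (fst r)) x y)" .
  qed
  have onpath: "\<And>x k. x \<in> set cs \<Longrightarrow> k < length es \<Longrightarrow> k \<notin> fst ` set rt \<Longrightarrow> x \<in> set (P k) \<Longrightarrow>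
      x \<in> \<phi> ` (sti es ` set rt) \<and> (x = \<phi> (fst (es!k)) \<or> x = \<phi> (snd (es!k)))"
  proof -
    fix x k assume x: "x \<in> set cs" and k: "k < length es" "k \<notin> fst ` set rt" "x \<in> set (P k)"
    obtain r where r: "r \<in> set rt" "x = \<phi> (sti es r) \<or> x \<in> set (interior (P (fst r)))"
      using x setcs by auto
    have kr: "fst r \<noteq> k" using r k by force
    have fr: "fst r < length es" using r idx by auto
    have deck: "P k = hd (P k) # interior (P k) @ [last (P k)]" using pk k decomp by blast
    have xk: "x = \<phi> (fst (es!k)) \<or> x = \<phi> (snd (es!k)) \<or> x \<in> set (interior (P k))"
      using k(3) pk k(1) by (subst (asm) deck) auto
    have notint: "x \<notin> set (interior (P k))"
    proof
      assume xi: "x \<in> set (interior (P k))"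
      show False using r(2)
      proof
        assume "x = \<phi> (sti es r)" then show False using xi pk k(1) of(9)[OF fr] by blast
      next
        assume "x \<in> set (interior (P (fst r)))" then show False using xi disj k(1) fr kr by blast
      qed
    qed
    have "x \<notin> set (interior (P (fst r)))" using xk notint pk k(1) fr by blast
    then have "x = \<phi> (sti es r)" using r by blast
    then show "x \<in> \<phi> ` (sti es ` set rt) \<and> (x = \<phi> (fst (es!k)) \<or> x = \<phi> (snd (es!k)))"
      using r xk notint by blast
  qed
  have adjcs: "\<forall>x\<in>set cs. \<forall>y\<in>set cs. E x y \<longleftrightarrow> path_adj (cs @ [hd cs]) x y"
  proof (intro ballI)
    fix x y assume x: "x \<in> set cs" and y: "y \<in> set cs"
    have "E x y \<longleftrightarrow> (\<exists>i<length es. path_adj (P i) x y)" using adj sub x y by blast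
    also have "\<dots> \<longleftrightarrow> (\<exists>r\<in>set rt. path_adj (P (fst r)) x y)"
    proof
      assume "\<exists>i<length es. path_adj (P i) x y"
      then obtain k where k: "k < length es" "path_adj (P k) x y" by blast
      show "\<exists>r\<in>set rt. path_adj (P (fst r)) x y"
      proof (cases "k \<in> fst ` set rt")
        case True then show ?thesis using k by force
      next
        case False
        have xy: "x \<in> set (P k)" "y \<in> set (P k)" using path_adj_set[OF k(2)] by auto
        have neq: "x \<noteq> y" using path_adj_neq[OF _ k(2)] pk k(1) by blast
        have X: "x \<in> \<phi> ` (sti es ` set rt) \<and> (x = \<phi> (fst (es!k)) \<or> x = \<phi> (snd (es!k)))"
          using onpath[OF x k(1) False xy(1)] .
        have Y: "y \<in> \<phi> ` (sti es ` set rt) \<and> (y = \<phi> (fst (es!k)) \<or> y = \<phi> (snd (es!k)))"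
          using onpath[OF y k(1) False xy(2)] .
        have sKV: "sti es ` set rt \<subseteq> KV" using of(9) idx by auto
        have fK: "fst (es!k) \<in> KV" "snd (es!k) \<in> KV" using pk k(1) by auto
        define T where "T = \<phi> ` (sti es ` set rt)"
        have xyT: "{x,y} \<subseteq> T" using X Y unfolding T_def by simp
        have xo: "x = \<phi> (fst (es!k)) \<or> x = \<phi> (snd (es!k))" using X by simp
        have yo: "y = \<phi> (fst (es!k)) \<or> y = \<phi> (snd (es!k))" using Y by simp
        have "\<phi> (fst (es!k)) \<in> {x,y} \<and> \<phi> (snd (es!k)) \<in> {x,y}" using xo yo neq by fastforce
        then have "\<phi> (fst (es!k)) \<in> \<phi> ` (sti es ` set rt)" "\<phi> (snd (es!k)) \<in> \<phi> ` (sti es ` set rt)"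
          using xyT unfolding T_def by blast+
        then have "fst (es!k) \<in> sti es ` set rt" "snd (es!k) \<in> sti es ` set rt"
          using inj sKV fK by (meson inj_on_image_mem_iff)+
        then show ?thesis using nc k(1) False by blast
      qed
    next
      assume "\<exists>r\<in>set rt. path_adj (P (fst r)) x y"
      then show "\<exists>i<length es. path_adj (P i) x y" using idx by blast
    qed
    also have "\<dots> \<longleftrightarrow> path_adj (cs @ [hd cs]) x y" using walk by simp
    finally show "E x y \<longleftrightarrow> path_adj (cs @ [hd cs]) x y" .
  qed
  show ?thesis using dist sub len adjcs by blast
qed

fun chain :: "(nat \<times> nat) list \<Rightarrow> (nat \<times> bool) list \<Rightarrow> bool" where
  "chain es (r1 # r2 # rs) = (edi es r1 = sti es r2 \<and> chain es (r2 # rs))"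
| "chain es _ = True"

lemma chain_nth: "chain es rt \<Longrightarrow> \<forall>i. Suc i < length rt \<longrightarrow> edi es (rt!i) = sti es (rt!Suc i)"
proof (induction es rt rule: chain.induct)
  case (1 es r1 r2 rs)
  show ?case
  proof (intro allI impI)
    fix i assume i: "Suc i < length (r1 # r2 # rs)"
    show "edi es ((r1 # r2 # rs) ! i) = sti es ((r1 # r2 # rs) ! Suc i)"
    proof (cases i)
      case 0 then show ?thesis using "1.prems" by simp
    next
      case (Suc m) then show ?thesis using "1.prems" "1.IH" i by simp
    qed
  qed
qed auto

lemma route5:
  assumes f1: "\<not> has_induced V E {0..<6} twoP3_E"
    and f2: "\<not> has_induced V E {0..<4} (cycle_E 4)"
    and f3: "\<not> has_induced V E {0..<6} (cycle_E 6)"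
    and f4: "\<not> has_induced V E {0..<7} (cycle_E 7)"
    and sd: "subdiv_in E S KV es \<phi> P" and SV: "S \<subseteq> V"
    and ne: "rt \<noteq> []"
    and idx: "list_all (\<lambda>r. fst r < length es) rt"
    and dk: "distinct (map fst rt)"
    and ch: "chain es rt"
    and cl: "edi es (last rt) = sti es (hd rt)"
    and ds: "distinct (map (sti es) rt)"
    and nc: "list_all (\<lambda>k. k \<notin> set (map fst rt) \<longrightarrow> \<not> (fst (es!k) \<in> set (map (sti es) rt) \<and> snd (es!k) \<in> set (map (sti es) rt))) [0..<length es]"
    and ge: "(\<Sum>r\<leftarrow>rt. length (P (fst r)) - 1) \<ge> 4"
  shows "(\<Sum>r\<leftarrow>rt. length (P (fst r)) - 1) = 5"
proof -
  define cs where "cs = concat (map (butlast \<circ> oq P) rt)"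
  have idx': "\<forall>r\<in>set rt. fst r < length es" using idx by (simp add: list_all_iff)
  have nc': "\<forall>k<length es. k \<notin> fst ` set rt \<longrightarrow> \<not> (fst (es!k) \<in> sti es ` set rt \<and> snd (es!k) \<in> sti es ` set rt)"
    using nc by (simp add: list_all_iff)
  have R: "distinct cs \<and> set cs \<subseteq> S \<and> length cs = (\<Sum>r\<leftarrow>rt. length (P (fst r)) - 1)
     \<and> (\<forall>x\<in>set cs. \<forall>y\<in>set cs. E x y \<longleftrightarrow> path_adj (cs @ [hd cs]) x y)"
    using route_hole[OF sd ne idx' dk chain_nth[OF ch] cl ds nc' cs_def] .
  have h: "hole E cs" using R ge by (intro hole_intro) auto
  have "length cs = 5" using hole_len5[OF f1 f2 f3 f4 h] R SV by blast
  then show ?thesis using R by simp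
qed

lemma lenP: "subdiv_in E S KV es \<phi> P \<Longrightarrow> i < length es \<Longrightarrow> length (P i) \<ge> 2"
  using oq_facts(5)[of E S KV es \<phi> P "(i,False)"] by simp

lemma no_theta:
  assumes f1: "\<not> has_induced V E {0..<6} twoP3_E"
    and f2: "\<not> has_induced V E {0..<4} (cycle_E 4)"
    and f3: "\<not> has_induced V E {0..<6} (cycle_E 6)"
    and f4: "\<not> has_induced V E {0..<7} (cycle_E 7)"
    and SV: "S \<subseteq> V" and th: "is_theta E S"
  shows False
proof -
  obtain \<phi> P where sd: "subdiv_in E S {0..4} K23_edges \<phi> P" using th unfolding is_theta_def by blast
  have L0: "length (P 0) \<ge> 2" "length (P 1) \<ge> 2" "length (P 2) \<ge> 2" "length (P 3) \<ge> 2" "length (P 4) \<ge> 2" "length (P 5) \<ge> 2"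
    using lenP[OF sd] by (simp_all add: K23_edges_def)
  note R = route5[OF f1 f2 f3 f4 sd SV]
  have a: "(length (P 0) - 1) + ((length (P 3) - 1) + ((length (P 4) - 1) + (length (P 1) - 1))) = 5"
    using R[of "[(0,False),(3,True),(4,False),(1,True)]"] L0
    by (simp add: K23_edges_def sti_def edi_def upt_rec)
  have b: "(length (P 0) - 1) + ((length (P 3) - 1) + ((length (P 5) - 1) + (length (P 2) - 1))) = 5"
    using R[of "[(0,False),(3,True),(5,False),(2,True)]"] L0
    by (simp add: K23_edges_def sti_def edi_def upt_rec)
  have c: "(length (P 1) - 1) + ((length (P 4) - 1) + ((length (P 5) - 1) + (length (P 2) - 1))) = 5"
    using R[of "[(1,False),(4,True),(5,False),(2,True)]"] L0
    by (simp add: K23_edges_def sti_def edi_def upt_rec)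
  have par: "\<And>x0 x1 x2 x3 x4 x5::nat. x0+(x3+(x4+x1)) = 5 \<Longrightarrow> x0+(x3+(x5+x2)) = 5 \<Longrightarrow> x1+(x4+(x5+x2)) = 5 \<Longrightarrow> False"
  proof -
    fix x0 x1 x2 x3 x4 x5::nat
    assume "x0+(x3+(x4+x1)) = 5" "x0+(x3+(x5+x2)) = 5" "x1+(x4+(x5+x2)) = 5"
    then have "2*(x0+x1+x2+x3+x4+x5) = 15" by simp
    then show False by presburger
  qed
  show False using par[OF a b c] .
qed

lemma no_prism:
  assumes f1: "\<not> has_induced V E {0..<6} twoP3_E"
    and f2: "\<not> has_induced V E {0..<4} (cycle_E 4)"
    and f3: "\<not> has_induced V E {0..<6} (cycle_E 6)"
    and f4: "\<not> has_induced V E {0..<7} (cycle_E 7)"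
    and SV: "S \<subseteq> V" and th: "is_prism E S"
  shows False
proof -
  obtain \<phi> P where sd: "subdiv_in E S {0..5} C6bar_edges \<phi> P" and l2: "\<forall>i<6. length (P i) = 2"
    using th unfolding is_prism_def by blast
  have L0: "length (P 0) = 2" "length (P 1) = 2" "length (P 2) = 2" "length (P 3) = 2" "length (P 4) = 2" "length (P 5) = 2"
    using l2 by auto
  have L1: "length (P 6) \<ge> 2" "length (P 7) \<ge> 2" "length (P 8) \<ge> 2"
    using lenP[OF sd] by (simp_all add: C6bar_edges_def)
  note R = route5[OF f1 f2 f3 f4 sd SV]
  have a: "(length (P 6) - 1) + ((length (P 3) - 1) + ((length (P 7) - 1) + (length (P 2) - 1))) = 5"
    using R[of "[(6,False),(3,True),(7,False),(2,True)]"] L0 L1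
    by (simp add: C6bar_edges_def sti_def edi_def upt_rec)
  have b: "(length (P 6) - 1) + ((length (P 4) - 1) + ((length (P 8) - 1) + (length (P 0) - 1))) = 5"
    using R[of "[(6,False),(4,False),(8,True),(0,True)]"] L0 L1
    by (simp add: C6bar_edges_def sti_def edi_def upt_rec)
  have c: "(length (P 7) - 1) + ((length (P 1) - 1) + ((length (P 8) - 1) + (length (P 5) - 1))) = 5"
    using R[of "[(7,False),(1,True),(8,False),(5,True)]"] L0 L1
    by (simp add: C6bar_edges_def sti_def edi_def upt_rec)
  have par: "\<And>x6 x7 x8::nat. x6 + x7 = 3 \<Longrightarrow> x6 + x8 = 3 \<Longrightarrow> x7 + x8 = 3 \<Longrightarrow> False"
  proof -
    fix x6 x7 x8::nat
    assume "x6 + x7 = 3" "x6 + x8 = 3" "x7 + x8 = 3"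
    then have "2*(x6+x7+x8) = 9" by simp
    then show False by presburger
  qed
  have a': "(length (P 6) - 1) + (length (P 7) - 1) = 3" using a L0 by simp
  have b': "(length (P 6) - 1) + (length (P 8) - 1) = 3" using b L0 by simp
  have c': "(length (P 7) - 1) + (length (P 8) - 1) = 3" using c L0 by simp
  show False using par[OF a' b' c'] .
qed

lemma sd_facts:
  assumes "subdiv_in E S KV es \<phi> P"
  shows "inj_on \<phi> KV"
    "\<And>i. i < length es \<Longrightarrow> hd (P i) = \<phi> (fst (es ! i)) \<and> last (P i) = \<phi> (snd (es ! i))"
    "\<And>i x. i < length es \<Longrightarrow> x \<in> set (interior (P i)) \<Longrightarrow> x \<notin> \<phi> ` KV"
    "\<And>i j. i < length es \<Longrightarrow> j < length es \<Longrightarrow> i \<noteq> j \<Longrightarrow> set (interior (P i)) \<inter> set (interior (P j)) = {}"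
    "S = \<phi> ` KV \<union> (\<Union>i<length es. set (P i))"
    "\<forall>x\<in>S. \<forall>y\<in>S. E x y \<longleftrightarrow> (\<exists>i<length es. path_adj (P i) x y)"
  using assms unfolding subdiv_in_def by blast+

lemma len2: "length xs = 2 \<Longrightarrow> xs = [hd xs, last xs]"
  by (cases xs; cases "tl xs") auto

lemma len3: "length xs = 3 \<Longrightarrow> xs = [hd xs, xs!1, last xs] \<and> interior xs = [xs!1]"
  unfolding interior_def
  by (cases xs; cases "tl xs"; cases "tl (tl xs)") auto

lemma card3: "card {i \<in> {3::nat,4,5}. Q i} \<ge> 2 \<Longrightarrow> (Q 3 \<and> Q 4) \<or> (Q 3 \<and> Q 5) \<or> (Q 4 \<and> Q 5)"
proof -
  have e: "{i \<in> {3::nat,4,5}. Q i} = (if Q 3 then {3} else {}) \<union> (if Q 4 then {4} else {}) \<union> (if Q 5 then {5} else {})"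
    by auto
  assume "card {i \<in> {3::nat,4,5}. Q i} \<ge> 2"
  then show ?thesis unfolding e by (cases "Q 3"; cases "Q 4"; cases "Q 5") simp_all
qed

lemma ex6: "(\<exists>i<(6::nat). Q i) \<longleftrightarrow> Q 0 \<or> Q 1 \<or> Q 2 \<or> Q 3 \<or> Q 4 \<or> Q 5"
proof
  assume "\<exists>i<(6::nat). Q i"
  then obtain i where "i < (6::nat)" "Q i" by blast
  moreover have "i < 6 \<Longrightarrow> i = 0 \<or> i = 1 \<or> i = 2 \<or> i = 3 \<or> i = 4 \<or> i = 5" by arith
  ultimately show "Q 0 \<or> Q 1 \<or> Q 2 \<or> Q 3 \<or> Q 4 \<or> Q 5" by auto
next
  assume "Q 0 \<or> Q 1 \<or> Q 2 \<or> Q 3 \<or> Q 4 \<or> Q 5"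
  then show "\<exists>i<(6::nat). Q i"
    by force
qed

lemma pent_table:
  assumes "a \<noteq> m3" "a \<noteq> m4" "a \<noteq> m5" "a \<noteq> c0" "a \<noteq> c1" "a \<noteq> c2" "m3 \<noteq> m4" "m3 \<noteq> m5" "m3 \<noteq> c0" "m3 \<noteq> c1" "m3 \<noteq> c2" "m4 \<noteq> m5" "m4 \<noteq> c0" "m4 \<noteq> c1" "m4 \<noteq> c2" "m5 \<noteq> c0" "m5 \<noteq> c1" "m5 \<noteq> c2" "c0 \<noteq> c1" "c0 \<noteq> c2" "c1 \<noteq> c2"
    and u: "u < (7::nat)" and v: "v < (7::nat)"
  shows "pent3_E u v \<longleftrightarrow> (let vs = [a, m3, m4, m5, c0, c1, c2] in
     path_adj [c0, c1] (vs ! u) (vs ! v) \<or> path_adj [c1, c2] (vs ! u) (vs ! v) \<or> path_adj [c0, c2] (vs ! u) (vs ! v) \<or>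
     path_adj [c0, m3, a] (vs ! u) (vs ! v) \<or> path_adj [c1, m4, a] (vs ! u) (vs ! v) \<or> path_adj [c2, m5, a] (vs ! u) (vs ! v))"
proof -
  note n = assms(1-21) assms(1-21)[symmetric]
  have uu: "u = 0 \<or> u = 1 \<or> u = 2 \<or> u = 3 \<or> u = 4 \<or> u = 5 \<or> u = 6" using u by auto
  have vv: "v = 0 \<or> v = 1 \<or> v = 2 \<or> v = 3 \<or> v = 4 \<or> v = 5 \<or> v = 6" using v by auto
  show ?thesis using uu vv
    by (elim disjE) (simp_all add: path_adj_Cons pent3_E_def pent3_edge_def n)
qed

lemma no_pyramid:
  assumes f1: "\<not> has_induced V E {0..<6} twoP3_E"
    and f2: "\<not> has_induced V E {0..<4} (cycle_E 4)"
    and f3: "\<not> has_induced V E {0..<6} (cycle_E 6)"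
    and f4: "\<not> has_induced V E {0..<7} (cycle_E 7)"
    and f5: "\<not> has_induced V E {0..<7} pent3_E"
    and SV: "S \<subseteq> V" and th: "is_pyramid E S"
  shows False
proof -
  obtain \<phi> P where sd: "subdiv_in E S {0..3} K4_edges \<phi> P"
    and L0: "length (P 0) = 2" "length (P 1) = 2" "length (P 2) = 2"
    and cd: "card {i \<in> {3,4,5}. length (P i) \<ge> 3} \<ge> 2"
    using th unfolding is_pyramid_def by blast
  have L1: "length (P 3) \<ge> 2" "length (P 4) \<ge> 2" "length (P 5) \<ge> 2"
    using lenP[OF sd] by (simp_all add: K4_edges_def)
  note R = route5[OF f1 f2 f3 f4 sd SV]
  have a: "(length (P 3) - 1) + ((length (P 0) - 1) + (length (P 4) - 1)) \<ge> 4 \<Longrightarrow>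
      (length (P 3) - 1) + ((length (P 0) - 1) + (length (P 4) - 1)) = 5"
    using R[of "[(3,True),(0,False),(4,False)]"]
    by (simp add: K4_edges_def sti_def edi_def upt_rec)
  have b: "(length (P 4) - 1) + ((length (P 1) - 1) + (length (P 5) - 1)) \<ge> 4 \<Longrightarrow>
      (length (P 4) - 1) + ((length (P 1) - 1) + (length (P 5) - 1)) = 5"
    using R[of "[(4,True),(1,False),(5,False)]"]
    by (simp add: K4_edges_def sti_def edi_def upt_rec)
  have c: "(length (P 3) - 1) + ((length (P 2) - 1) + (length (P 5) - 1)) \<ge> 4 \<Longrightarrow>
      (length (P 3) - 1) + ((length (P 2) - 1) + (length (P 5) - 1)) = 5"
    using R[of "[(3,True),(2,False),(5,False)]"]
    by (simp add: K4_edges_def sti_def edi_def upt_rec)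
  have two: "(length (P 3) \<ge> 3 \<and> length (P 4) \<ge> 3) \<or> (length (P 3) \<ge> 3 \<and> length (P 5) \<ge> 3) \<or> (length (P 4) \<ge> 3 \<and> length (P 5) \<ge> 3)"
    using card3[of "\<lambda>i. length (P i) \<ge> 3"] cd by simp
  have aux: "\<And>x3 x4 x5::nat. x3 \<ge> 1 \<Longrightarrow> x4 \<ge> 1 \<Longrightarrow> x5 \<ge> 1 \<Longrightarrow>
     (x3 + (1 + x4) \<ge> 4 \<Longrightarrow> x3 + (1 + x4) = 5) \<Longrightarrow>
     (x4 + (1 + x5) \<ge> 4 \<Longrightarrow> x4 + (1 + x5) = 5) \<Longrightarrow>
     (x3 + (1 + x5) \<ge> 4 \<Longrightarrow> x3 + (1 + x5) = 5) \<Longrightarrow>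
     (x3 \<ge> 2 \<and> x4 \<ge> 2) \<or> (x3 \<ge> 2 \<and> x5 \<ge> 2) \<or> (x4 \<ge> 2 \<and> x5 \<ge> 2) \<Longrightarrow>
     x3 = 2 \<and> x4 = 2 \<and> x5 = 2"
    by linarith
  have "length (P 3) - 1 = 2 \<and> length (P 4) - 1 = 2 \<and> length (P 5) - 1 = 2"
  proof (rule aux)
    show "length (P 3) - 1 \<ge> 1" "length (P 4) - 1 \<ge> 1" "length (P 5) - 1 \<ge> 1" using L1 by auto
    show "length (P 3) - 1 + (1 + (length (P 4) - 1)) \<ge> 4 \<Longrightarrow> length (P 3) - 1 + (1 + (length (P 4) - 1)) = 5"
      using a L0 by simp
    show "length (P 4) - 1 + (1 + (length (P 5) - 1)) \<ge> 4 \<Longrightarrow> length (P 4) - 1 + (1 + (length (P 5) - 1)) = 5"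
      using b L0 by simp
    show "length (P 3) - 1 + (1 + (length (P 5) - 1)) \<ge> 4 \<Longrightarrow> length (P 3) - 1 + (1 + (length (P 5) - 1)) = 5"
      using c L0 by simp
    show "(length (P 3) - 1 \<ge> 2 \<and> length (P 4) - 1 \<ge> 2) \<or> (length (P 3) - 1 \<ge> 2 \<and> length (P 5) - 1 \<ge> 2) \<or> (length (P 4) - 1 \<ge> 2 \<and> length (P 5) - 1 \<ge> 2)"
      using two by auto
  qed
  then have L3: "length (P 3) = 3" "length (P 4) = 3" "length (P 5) = 3" by auto
  note F = sd_facts[OF sd]
  have hl: "\<And>i. i < 6 \<Longrightarrow> hd (P i) = \<phi> (fst (K4_edges ! i)) \<and> last (P i) = \<phi> (snd (K4_edges ! i))"
    using F(2) by (simp add: K4_edges_def)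
  define m3 where "m3 = P 3 ! 1"
  define m4 where "m4 = P 4 ! 1"
  define m5 where "m5 = P 5 ! 1"
  have P0: "P 0 = [\<phi> 0, \<phi> 1]" using len2[OF L0(1)] hl[of 0] by (simp add: K4_edges_def)
  have P1: "P 1 = [\<phi> 1, \<phi> 2]" using len2[OF L0(2)] hl[of 1] by (simp add: K4_edges_def)
  have P2: "P 2 = [\<phi> 0, \<phi> 2]" using len2[OF L0(3)] hl[of 2] by (simp add: K4_edges_def)
  have P3: "P 3 = [\<phi> 0, m3, \<phi> 3]" "interior (P 3) = [m3]"
    using len3[OF L3(1)] hl[of 3] unfolding m3_def by (simp_all add: K4_edges_def)
  have P4: "P 4 = [\<phi> 1, m4, \<phi> 3]" "interior (P 4) = [m4]"
    using len3[OF L3(2)] hl[of 4] unfolding m4_def by (simp_all add: K4_edges_def)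
  have P5: "P 5 = [\<phi> 2, m5, \<phi> 3]" "interior (P 5) = [m5]"
    using len3[OF L3(3)] hl[of 5] unfolding m5_def by (simp_all add: K4_edges_def)
  have injp: "\<And>i j. i \<in> {0..3} \<Longrightarrow> j \<in> {0..3} \<Longrightarrow> i \<noteq> j \<Longrightarrow> \<phi> i \<noteq> \<phi> j"
    using F(1) unfolding inj_on_def by blast
  have mb: "m3 \<notin> \<phi> ` {0..3}" "m4 \<notin> \<phi> ` {0..3}" "m5 \<notin> \<phi> ` {0..3}"
    using F(3)[of 3 m3] F(3)[of 4 m4] F(3)[of 5 m5] P3(2) P4(2) P5(2) by (simp_all add: K4_edges_def)
  have mm: "m3 \<noteq> m4" "m3 \<noteq> m5" "m4 \<noteq> m5"
    using F(4)[of 3 4] F(4)[of 3 5] F(4)[of 4 5] P3(2) P4(2) P5(2) by (simp_all add: K4_edges_def)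
  have neqs: "\<phi> 3 \<noteq> m3" "\<phi> 3 \<noteq> m4" "\<phi> 3 \<noteq> m5" "\<phi> 3 \<noteq> \<phi> 0" "\<phi> 3 \<noteq> \<phi> 1" "\<phi> 3 \<noteq> \<phi> 2" "m3 \<noteq> \<phi> 3" "m3 \<noteq> m4" "m3 \<noteq> m5" "m3 \<noteq> \<phi> 0" "m3 \<noteq> \<phi> 1" "m3 \<noteq> \<phi> 2" "m4 \<noteq> \<phi> 3" "m4 \<noteq> m3" "m4 \<noteq> m5" "m4 \<noteq> \<phi> 0" "m4 \<noteq> \<phi> 1" "m4 \<noteq> \<phi> 2" "m5 \<noteq> \<phi> 3" "m5 \<noteq> m3" "m5 \<noteq> m4" "m5 \<noteq> \<phi> 0" "m5 \<noteq> \<phi> 1" "m5 \<noteq> \<phi> 2" "\<phi> 0 \<noteq> \<phi> 3" "\<phi> 0 \<noteq> m3" "\<phi> 0 \<noteq> m4" "\<phi> 0 \<noteq> m5" "\<phi> 0 \<noteq> \<phi> 1" "\<phi> 0 \<noteq> \<phi> 2" "\<phi> 1 \<noteq> \<phi> 3" "\<phi> 1 \<noteq> m3" "\<phi> 1 \<noteq> m4" "\<phi> 1 \<noteq> m5" "\<phi> 1 \<noteq> \<phi> 0" "\<phi> 1 \<noteq> \<phi> 2" "\<phi> 2 \<noteq> \<phi> 3" "\<phi> 2 \<noteq> m3" "\<phi> 2 \<noteq> m4" "\<phi> 2 \<noteq> m5" "\<phi> 2 \<noteq> \<phi> 0" "\<phi> 2 \<noteq> \<phi> 1"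
    using injp[of 0 1] injp[of 0 2] injp[of 0 3] injp[of 1 2] injp[of 1 3] injp[of 2 3] mb mm by auto
  define vs where "vs = [\<phi> 3, m3, m4, m5, \<phi> 0, \<phi> 1, \<phi> 2]"
  have dvs: "distinct vs" unfolding vs_def using neqs by simp
  have inS: "set vs \<subseteq> S"
  proof -
    have "\<phi> ` {0..3} \<subseteq> S" using F(5) by blast
    moreover have "set (P 3) \<subseteq> S" "set (P 4) \<subseteq> S" "set (P 5) \<subseteq> S"
      using F(5) by (auto simp: K4_edges_def)
    ultimately show ?thesis unfolding vs_def using P3 P4 P5 by auto
  qed
  have Eq: "\<And>x y. x \<in> S \<Longrightarrow> y \<in> S \<Longrightarrow> E x y \<longleftrightarrow>
     path_adj [\<phi> 0, \<phi> 1] x y \<or> path_adj [\<phi> 1, \<phi> 2] x y \<or> path_adj [\<phi> 0, \<phi> 2] x y \<or>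
     path_adj [\<phi> 0, m3, \<phi> 3] x y \<or> path_adj [\<phi> 1, m4, \<phi> 3] x y \<or> path_adj [\<phi> 2, m5, \<phi> 3] x y"
  proof -
    fix x y assume "x \<in> S" "y \<in> S"
    have l6: "length K4_edges = 6" by (simp add: K4_edges_def)
    have "E x y \<longleftrightarrow> (\<exists>i<6. path_adj (P i) x y)" using F(6) \<open>x \<in> S\<close> \<open>y \<in> S\<close> unfolding l6 by blast
    then show "E x y \<longleftrightarrow>
     path_adj [\<phi> 0, \<phi> 1] x y \<or> path_adj [\<phi> 1, \<phi> 2] x y \<or> path_adj [\<phi> 0, \<phi> 2] x y \<or>
     path_adj [\<phi> 0, m3, \<phi> 3] x y \<or> path_adj [\<phi> 1, m4, \<phi> 3] x y \<or> path_adj [\<phi> 2, m5, \<phi> 3] x y"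
      unfolding ex6 using P0 P1 P2 P3(1) P4(1) P5(1) by simp
  qed
  have "has_induced V E {0..<7} pent3_E"
    unfolding has_induced_def
  proof (intro exI[of _ "nth vs"] conjI)
    show "inj_on ((!) vs) {0..<7}" using dvs by (auto simp: inj_on_nth vs_def)
    show "(!) vs ` {0..<7} \<subseteq> V"
    proof
      fix y assume "y \<in> (!) vs ` {0..<7}"
      then obtain x where x: "x < 7" "y = vs!x" by auto
      have lv: "length vs = 7" by (simp add: vs_def)
      have "y \<in> set vs" using x lv by (simp add: nth_mem)
      then show "y \<in> V" using inS SV by auto
    qed
    show "\<forall>u\<in>{0..<7}. \<forall>v\<in>{0..<7}. pent3_E u v = E (vs ! u) (vs ! v)"
    proof (intro ballI)
      fix u v assume u: "u \<in> {0..<(7::nat)}" and v: "v \<in> {0..<(7::nat)}"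
      have lv: "length vs = 7" by (simp add: vs_def)
      have "vs ! u \<in> set vs" "vs ! v \<in> set vs" using u v lv by (simp_all add: nth_mem)
      then have "vs ! u \<in> S" "vs ! v \<in> S" using inS by auto
      then have e: "E (vs ! u) (vs ! v) \<longleftrightarrow>
     path_adj [\<phi> 0, \<phi> 1] (vs ! u) (vs ! v) \<or> path_adj [\<phi> 1, \<phi> 2] (vs ! u) (vs ! v) \<or> path_adj [\<phi> 0, \<phi> 2] (vs ! u) (vs ! v) \<or>
     path_adj [\<phi> 0, m3, \<phi> 3] (vs ! u) (vs ! v) \<or> path_adj [\<phi> 1, m4, \<phi> 3] (vs ! u) (vs ! v) \<or> path_adj [\<phi> 2, m5, \<phi> 3] (vs ! u) (vs ! v)"
        using Eq by blast
      have uv: "u < 7" "v < 7" using u v by auto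
      have T: "pent3_E u v \<longleftrightarrow>
     path_adj [\<phi> 0, \<phi> 1] (vs ! u) (vs ! v) \<or> path_adj [\<phi> 1, \<phi> 2] (vs ! u) (vs ! v) \<or> path_adj [\<phi> 0, \<phi> 2] (vs ! u) (vs ! v) \<or>
     path_adj [\<phi> 0, m3, \<phi> 3] (vs ! u) (vs ! v) \<or> path_adj [\<phi> 1, m4, \<phi> 3] (vs ! u) (vs ! v) \<or> path_adj [\<phi> 2, m5, \<phi> 3] (vs ! u) (vs ! v)"
        using pent_table[of "\<phi> 3" m3 m4 m5 "\<phi> 0" "\<phi> 1" "\<phi> 2" u v] neqs uv
        unfolding Let_def vs_def[symmetric] by blast
      show "pent3_E u v = E (vs ! u) (vs ! v)" using T e by blast
    qed
  qed
  then show False using f5 by simp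
qed

lemma ex5: "(\<exists>i<(5::nat). Q i) \<longleftrightarrow> Q 0 \<or> Q 1 \<or> Q 2 \<or> Q 3 \<or> Q 4"
proof
  assume "\<exists>i<(5::nat). Q i"
  then obtain i where "i < (5::nat)" "Q i" by blast
  moreover have "i < 5 \<Longrightarrow> i = 0 \<or> i = 1 \<or> i = 2 \<or> i = 3 \<or> i = 4" by arith
  ultimately show "Q 0 \<or> Q 1 \<or> Q 2 \<or> Q 3 \<or> Q 4" by auto
next
  assume "Q 0 \<or> Q 1 \<or> Q 2 \<or> Q 3 \<or> Q 4"
  then show "\<exists>i<(5::nat). Q i" by force
qed

lemma wheel_gap:
  assumes d: "distinct [c0,c1,c2,c3,c4]"
    and cd: "card {v \<in> set [c0,c1,c2,c3,c4]. E x v} \<ge> 3"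
    and na: "\<not> (\<forall>v\<in>set [c0,c1,c2,c3,c4]. E x v)"
    and nt: "\<not> (\<exists>i<length [c0,c1,c2,c3,c4]. {v \<in> set [c0,c1,c2,c3,c4]. E x v} =
            {[c0,c1,c2,c3,c4] ! i, [c0,c1,c2,c3,c4] ! ((i + 1) mod length [c0,c1,c2,c3,c4]),
             [c0,c1,c2,c3,c4] ! ((i + 2) mod length [c0,c1,c2,c3,c4])})"
  shows "(E x c4 \<and> \<not> E x c0 \<and> E x c1) \<or> (E x c0 \<and> \<not> E x c1 \<and> E x c2) \<or> (E x c1 \<and> \<not> E x c2 \<and> E x c3)
     \<or> (E x c2 \<and> \<not> E x c3 \<and> E x c4) \<or> (E x c3 \<and> \<not> E x c4 \<and> E x c0)"
proof -
  let ?cs = "[c0,c1,c2,c3,c4]"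
  have N: "{v \<in> set ?cs. E x v} = set (filter (E x) ?cs)" by auto
  have C: "card (set (filter (E x) ?cs)) = length (filter (E x) ?cs)"
    using d by (intro distinct_card) simp
  have cd': "length (filter (E x) ?cs) \<ge> 3" using cd N C by simp
  have nt': "\<not> (\<exists>i<5. set (filter (E x) ?cs) = {?cs ! i, ?cs ! ((i + 1) mod 5), ?cs ! ((i + 2) mod 5)})"
    using nt N by simp
  show ?thesis using cd' na nt' unfolding ex5
    by (cases "E x c0"; cases "E x c1"; cases "E x c2"; cases "E x c3"; cases "E x c4"; simp add: insert_commute)
qed

lemma c4_found:
  assumes g: "graph V E" and c4: "\<not> has_induced V E {0..<4} (cycle_E 4)"
    and V: "x \<in> V" "p \<in> V" "q \<in> V" "r \<in> V"
    and d: "distinct [x,p,q,r]"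
    and e: "E x p" "E p q" "E q r" "E r x" "\<not> E x q" "\<not> E p r"
  shows False
proof -
  have sym: "\<And>a b. E a b \<Longrightarrow> E b a" and irr: "\<And>a. \<not> E a a" using g unfolding graph_def by blast+
  have e2: "E p x" "E q p" "E r q" "E x r" "\<not> E q x" "\<not> E r p" using e sym by blast+
  define vs where "vs = [x,p,q,r]"
  have "has_induced V E {0..<4} (cycle_E 4)"
    unfolding has_induced_def
  proof (intro exI[of _ "nth vs"] conjI)
    show "inj_on ((!) vs) {0..<4}" using d by (auto simp: inj_on_nth vs_def)
    show "(!) vs ` {0..<4} \<subseteq> V"
    proof
      fix y assume "y \<in> (!) vs ` {0..<4}"
      then obtain i where i: "i < 4" "y = vs ! i" by auto
      then have "i = 0 \<or> i = 1 \<or> i = 2 \<or> i = 3" by auto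
      then show "y \<in> V" using i V unfolding vs_def by auto
    qed
    show "\<forall>u\<in>{0..<4}. \<forall>v\<in>{0..<4}. cycle_E 4 u v = E (vs ! u) (vs ! v)"
    proof (intro ballI)
      fix u v assume u: "u \<in> {0..<(4::nat)}" and v: "v \<in> {0..<(4::nat)}"
      have uu: "u = 0 \<or> u = 1 \<or> u = 2 \<or> u = 3" using u by auto
      have vv: "v = 0 \<or> v = 1 \<or> v = 2 \<or> v = 3" using v by auto
      show "cycle_E 4 u v = E (vs ! u) (vs ! v)" using uu vv
        by (elim disjE) (simp_all add: vs_def cycle_E_def e e2 irr)
    qed
  qed
  then show False using c4 by simp
qed

lemma no_wheel:
  assumes g: "graph V E"
    and f1: "\<not> has_induced V E {0..<6} twoP3_E"
    and f2: "\<not> has_induced V E {0..<4} (cycle_E 4)"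
    and f3: "\<not> has_induced V E {0..<6} (cycle_E 6)"
    and f4: "\<not> has_induced V E {0..<7} (cycle_E 7)"
    and sV: "set cs \<subseteq> V" and xV: "x \<in> V" and pw: "proper_wheel E cs x"
  shows False
proof -
  have sym: "\<And>a b. E a b \<Longrightarrow> E b a" using g unfolding graph_def by blast
  have h: "hole E cs" and xn: "x \<notin> set cs" using pw unfolding proper_wheel_def by blast+
  have l5: "length cs = 5" using hole_len5[OF f1 f2 f3 f4 h sV] .
  have cs0: "cs = [cs!0, cs!1, cs!2, cs!3, cs!4]"
  proof (rule nth_equalityI)
    show "length cs = length [cs!0, cs!1, cs!2, cs!3, cs!4]" using l5 by simp
    fix i assume "i < length cs"
    then have "i = 0 \<or> i = 1 \<or> i = 2 \<or> i = 3 \<or> i = 4" using l5 by auto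
    then show "cs!i = [cs!0, cs!1, cs!2, cs!3, cs!4] ! i" by auto
  qed
  obtain c0 c1 c2 c3 c4 where cs: "cs = [c0,c1,c2,c3,c4]" using cs0 by blast
  have d: "distinct [c0,c1,c2,c3,c4]" using h cs unfolding hole_def by simp
  have H: "\<And>i j. i < 5 \<Longrightarrow> j < 5 \<Longrightarrow> E (cs!i) (cs!j) = cycle_E 5 i j" using h l5 unfolding hole_def by simp
  have ed: "E c0 c1" "E c1 c2" "E c2 c3" "E c3 c4" "E c4 c0"
    using H[of 0 1] H[of 1 2] H[of 2 3] H[of 3 4] H[of 4 0] unfolding cs by (simp_all add: cycle_E_def)
  have ne: "\<not> E c0 c2" "\<not> E c1 c3" "\<not> E c2 c4" "\<not> E c3 c0" "\<not> E c4 c1"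
    using H[of 0 2] H[of 1 3] H[of 2 4] H[of 3 0] H[of 4 1] unfolding cs by (simp_all add: cycle_E_def)
  have ne2: "\<not> E c2 c0" "\<not> E c3 c1" "\<not> E c4 c2" "\<not> E c0 c3" "\<not> E c1 c4"
    using ne sym by blast+
  have ed2: "E c1 c0" "E c2 c1" "E c3 c2" "E c4 c3" "E c0 c4" using ed sym by blast+
  have pw': "card {v \<in> set cs. E x v} \<ge> 3" "\<not> (\<forall>v\<in>set cs. E x v)"
     "\<not> (\<exists>i<length cs. {v \<in> set cs. E x v} =
            {cs ! i, cs ! ((i + 1) mod length cs), cs ! ((i + 2) mod length cs)})"
    using pw unfolding proper_wheel_def by blast+
  have gap: "(E x c4 \<and> \<not> E x c0 \<and> E x c1) \<or> (E x c0 \<and> \<not> E x c1 \<and> E x c2) \<or> (E x c1 \<and> \<not> E x c2 \<and> E x c3)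
     \<or> (E x c2 \<and> \<not> E x c3 \<and> E x c4) \<or> (E x c3 \<and> \<not> E x c4 \<and> E x c0)"
    by (rule wheel_gap[of c0 c1 c2 c3 c4 E x, OF d pw'(1)[unfolded cs] pw'(2)[unfolded cs] pw'(3)[unfolded cs]])
  have V: "c0 \<in> V" "c1 \<in> V" "c2 \<in> V" "c3 \<in> V" "c4 \<in> V" using sV cs by auto
  have xd: "x \<noteq> c0" "x \<noteq> c1" "x \<noteq> c2" "x \<noteq> c3" "x \<noteq> c4" using xn cs by auto
  note C = c4_found[OF g f2 xV]
  show False using gap
  proof (elim disjE conjE)
    assume "E x c4" "\<not> E x c0" "E x c1"
    then show False using C[OF V(5) V(1) V(2) _ \<open>E x c4\<close> ed(5) ed(1) sym[OF \<open>E x c1\<close>] \<open>\<not> E x c0\<close> ne(5)] d xd by auto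
  next
    assume "E x c0" "\<not> E x c1" "E x c2"
    then show False using C[OF V(1) V(2) V(3) _ \<open>E x c0\<close> ed(1) ed(2) sym[OF \<open>E x c2\<close>] \<open>\<not> E x c1\<close> ne(1)] d xd by auto
  next
    assume "E x c1" "\<not> E x c2" "E x c3"
    then show False using C[OF V(2) V(3) V(4) _ \<open>E x c1\<close> ed(2) ed(3) sym[OF \<open>E x c3\<close>] \<open>\<not> E x c2\<close> ne(2)] d xd by auto
  next
    assume "E x c2" "\<not> E x c3" "E x c4"
    then show False using C[OF V(3) V(4) V(5) _ \<open>E x c2\<close> ed(3) ed(4) sym[OF \<open>E x c4\<close>] \<open>\<not> E x c3\<close> ne(3)] d xd by auto
  next
    assume "E x c3" "\<not> E x c4" "E x c0"
    then show False using C[OF V(4) V(5) V(1) _ \<open>E x c3\<close> ed(4) ed(5) sym[OF \<open>E x c0\<close>] \<open>\<not> E x c4\<close> ne(4)] d xd by auto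
  qed
qed

theorem proposition6p1:
  fixes V :: "'a set" and E :: "'a \<Rightarrow> 'a \<Rightarrow> bool"
  assumes "graph V E"
    and "\<not> has_induced V E {0..<6} twoP3_E"
    and "\<not> has_induced V E {0..<4} (cycle_E 4)"
    and "\<not> has_induced V E {0..<6} (cycle_E 6)"
    and "\<not> has_induced V E {0..<7} (cycle_E 7)"
    and "\<not> has_induced V E {0..<7} pent3_E"
  shows "\<not> has_3PC V E \<and> \<not> has_proper_wheel V E"
proof
  show "\<not> has_3PC V E"
  proof
    assume "has_3PC V E"
    then obtain S where S: "S \<subseteq> V" "is_theta E S \<or> is_pyramid E S \<or> is_prism E S"
      unfolding has_3PC_def by blast
    show False using S(2)
    proof (elim disjE)
      assume "is_theta E S" then show False using no_theta[OF assms(2-5) S(1)] by blast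
    next
      assume "is_pyramid E S" then show False using no_pyramid[OF assms(2-6) S(1)] by blast
    next
      assume "is_prism E S" then show False using no_prism[OF assms(2-5) S(1)] by blast
    qed
  qed
  show "\<not> has_proper_wheel V E"
  proof
    assume "has_proper_wheel V E"
    then obtain cs x where "set cs \<subseteq> V" "x \<in> V" "proper_wheel E cs x"
      unfolding has_proper_wheel_def by blast
    then show False using no_wheel[OF assms(1-5)] by blast
  qed
qed

end
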